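(* For an $R$-module $M$ the following are equivalent: (i) $M$ is simple-$\mathcal F$-torsion-free; (ii) $M$ is prime, uniform, and $\mathrm{Ann}_R(M)\in\mathcal F^*$; (iii) there exist $\mathfrak p\in\mathcal F^*$ and a monomorphism $M\hookrightarrow\kappa(\mathfrak p)=R_{\mathfrak p}/\mathfrak pR_{\mathfrak p}$ with $M\neq 0$.
   Context: Throughout, $R$ is a commutative Noetherian local ring and $\mathcal F$ is a Gabriel topology on $R$: a nonempty set of ideals of $R$ such that (1) if $\mathfrak a\in\mathcal F$ and $\mathfrak a\subseteq\mathfrak b$ then $\mathfrak b\in\mathcal F$; (2) if $\mathfrak a,\mathfrak b\in\mathcal F$ then $\mathfrak a\cap\mathfrak b\in\mathcal F$; (3) if $\mathfrak b$ is an ideal and there is $\mathfrak a\in\mathcal F$ with $(\mathfrak b:r)\in\mathcal F$ for all $r\in\mathfrak a$, then $\mathfrak b\in\mathcal F$. For an $R$-module $X$ and ideal $\mathfrak a$, $X[\mathfrak a]=\{x\in X:\mathfrak a x=0\}$. $X$ is $\mathcal F$-torsion-free if $X[\mathfrak a]=0$ for all $\mathfrak a\in\mathcal F$. $M$ is simple-$\mathcal F$-torsion-free if $M\neq0$, $M$ is $\mathcal F$-torsion-free, and for every submodule $0\neq U\subsetneq M$, $M/U$ is not $\mathcal F$-torsion-free. $\mathcal F^*$ denotes the set of maximal elements (under inclusion) of $\mathrm{Spec}(R)\setminus\mathcal F$. A module $M\neq0$ is prime if every $r\in R$ acts on $M$ either as zero or injectively. A module is uniform if it is nonzero and any two nonzero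 submodules intersect nontrivially. *)

theory Defs
  imports Main
begin

definition ring_ideal :: "'a::comm_ring_1 set \<Rightarrow> bool" where
  "ring_ideal I \<longleftrightarrow> 0 \<in> I \<and> (\<forall>x\<in>I. \<forall>y\<in>I. x + y \<in> I) \<and> (\<forall>r. \<forall>x\<in>I. r * x \<in> I)"

definition prime_ideal :: "'a::comm_ring_1 set \<Rightarrow> bool" where
  "prime_ideal P \<longleftrightarrow> ring_ideal P \<and> 1 \<notin> P \<and> (\<forall>a b. a * b \<in> P \<longrightarrow> a \<in> P \<or> b \<in> P)"

definition maximal_ideal :: "'a::comm_ring_1 set \<Rightarrow> bool" where
  "maximal_ideal m \<longleftrightarrow> ring_ideal m \<and> m \<noteq> UNIV \<and>
     (\<forall>J. ring_ideal J \<and> m \<subseteq> J \<longrightarrow> J = m \<or> J = UNIV)"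

definition noetherian_ring :: "'a::comm_ring_1 itself \<Rightarrow> bool" where
  "noetherian_ring _ \<longleftrightarrow>
     (\<forall>I :: nat \<Rightarrow> 'a set. (\<forall>n. ring_ideal (I n) \<and> I n \<subseteq> I (Suc n)) \<longrightarrow>
        (\<exists>N. \<forall>n\<ge>N. I n = I N))"

definition local_ring :: "'a::comm_ring_1 itself \<Rightarrow> bool" where
  "local_ring _ \<longleftrightarrow> (\<exists>!m :: 'a set. maximal_ideal m)"

definition colon_ideal :: "'a::comm_ring_1 set \<Rightarrow> 'a \<Rightarrow> 'a set" where
  "colon_ideal b r = {x. x * r \<in> b}"

definition gabriel_topology :: "'a::comm_ring_1 set set \<Rightarrow> bool" where
  "gabriel_topology F \<longleftrightarrow>
     F \<noteq> {} \<and> (\<forall>a\<in>F. ring_ideal a) \<and>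
     (\<forall>a b. a \<in> F \<and> ring_ideal b \<and> a \<subseteq> b \<longrightarrow> b \<in> F) \<and>
     (\<forall>a\<in>F. \<forall>b\<in>F. a \<inter> b \<in> F) \<and>
     (\<forall>b a. ring_ideal b \<and> a \<in> F \<and> (\<forall>r\<in>a. colon_ideal b r \<in> F) \<longrightarrow> b \<in> F)"

definition Fstar :: "'a::comm_ring_1 set set \<Rightarrow> 'a set set" where
  "Fstar F = {p. prime_ideal p \<and> p \<notin> F \<and>
                 (\<forall>q. prime_ideal q \<and> q \<notin> F \<and> p \<subseteq> q \<longrightarrow> q = p)}"

section \<open>Modules: the module is the whole type 'm with scalar action s\<close>

definition is_module :: "('a::comm_ring_1 \<Rightarrow> 'm::ab_group_add \<Rightarrow> 'm) \<Rightarrow> bool" where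
  "is_module s \<longleftrightarrow> (\<forall>a x y. s a (x + y) = s a x + s a y) \<and> (\<forall>a b x. s (a + b) x = s a x + s b x) \<and>
     (\<forall>a b x. s a (s b x) = s (a * b) x) \<and> (\<forall>x. s 1 x = x)"

definition submodule :: "('a::comm_ring_1 \<Rightarrow> 'm::ab_group_add \<Rightarrow> 'm) \<Rightarrow> 'm set \<Rightarrow> bool" where
  "submodule s U \<longleftrightarrow> 0 \<in> U \<and> (\<forall>x\<in>U. \<forall>y\<in>U. x + y \<in> U) \<and> (\<forall>c. \<forall>x\<in>U. s c x \<in> U)"

definition ann_sub :: "('a::comm_ring_1 \<Rightarrow> 'm::ab_group_add \<Rightarrow> 'm) \<Rightarrow> 'a set \<Rightarrow> 'm set" where
  "ann_sub s a = {x. \<forall>r\<in>a. s r x = 0}"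

definition F_torsion_free :: "('a::comm_ring_1 \<Rightarrow> 'm::ab_group_add \<Rightarrow> 'm) \<Rightarrow> 'a set set \<Rightarrow> bool" where
  "F_torsion_free s F \<longleftrightarrow> (\<forall>a\<in>F. ann_sub s a = {0})"

text \<open>The quotient M/U is F-torsion-free: (M/U)[a] = 0 for all a in F, i.e.
  every x with a x contained in U lies in U.\<close>
definition quot_F_torsion_free ::
  "('a::comm_ring_1 \<Rightarrow> 'm::ab_group_add \<Rightarrow> 'm) \<Rightarrow> 'a set set \<Rightarrow> 'm set \<Rightarrow> bool" where
  "quot_F_torsion_free s F U \<longleftrightarrow> (\<forall>a\<in>F. \<forall>x. (\<forall>r\<in>a. s r x \<in> U) \<longrightarrow> x \<in> U)"

definition simple_F_torsion_free ::
  "('a::comm_ring_1 \<Rightarrow> 'm::ab_group_add \<Rightarrow> 'm) \<Rightarrow> 'a set set \<Rightarrow> bool" where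
  "simple_F_torsion_free s F \<longleftrightarrow>
     (UNIV :: 'm set) \<noteq> {0} \<and> F_torsion_free s F \<and>
     (\<forall>U. submodule s U \<and> U \<noteq> {0} \<and> U \<noteq> UNIV \<longrightarrow> \<not> quot_F_torsion_free s F U)"

definition prime_module :: "('a::comm_ring_1 \<Rightarrow> 'm::ab_group_add \<Rightarrow> 'm) \<Rightarrow> bool" where
  "prime_module s \<longleftrightarrow> (UNIV :: 'm set) \<noteq> {0} \<and>
     (\<forall>r. (\<forall>x. s r x = 0) \<or> inj (s r))"

definition uniform_module :: "('a::comm_ring_1 \<Rightarrow> 'm::ab_group_add \<Rightarrow> 'm) \<Rightarrow> bool" where
  "uniform_module s \<longleftrightarrow> (UNIV :: 'm set) \<noteq> {0} \<and>
     (\<forall>U V. submodule s U \<and> submodule s V \<and> U \<noteq> {0} \<and> V \<noteq> {0}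
        \<longrightarrow> U \<inter> V \<noteq> {0})"

definition Ann :: "('a::comm_ring_1 \<Rightarrow> 'm::ab_group_add \<Rightarrow> 'm) \<Rightarrow> 'a set" where
  "Ann s = {r. \<forall>x. s r x = 0}"

section \<open>Residue field kappa(p) = R_p / p R_p, as classes of fractions r/t (t not in p)\<close>

text \<open>r/t and r'/t' have the same image in R_p/pR_p iff r t' - r' t \<in> p (p prime).\<close>
definition kappa_rel :: "'a::comm_ring_1 set \<Rightarrow> (('a \<times> 'a) \<times> ('a \<times> 'a)) set" where
  "kappa_rel p = {((r, t), (r', t')). t \<notin> p \<and> t' \<notin> p \<and> r * t' - r' * t \<in> p}"

definition kappa :: "'a::comm_ring_1 set \<Rightarrow> ('a \<times> 'a) set set" where
  "kappa p = {(r, t). t \<notin> p} // kappa_rel p"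

definition kappa_add :: "'a::comm_ring_1 set \<Rightarrow> ('a \<times> 'a) set \<Rightarrow> ('a \<times> 'a) set \<Rightarrow> ('a \<times> 'a) set" where
  "kappa_add p X Y = {z. \<exists>x\<in>X. \<exists>y\<in>Y.
      (z, (fst x * snd y + fst y * snd x, snd x * snd y)) \<in> kappa_rel p}"

definition kappa_scale :: "'a::comm_ring_1 set \<Rightarrow> 'a \<Rightarrow> ('a \<times> 'a) set \<Rightarrow> ('a \<times> 'a) set" where
  "kappa_scale p c X = {z. \<exists>x\<in>X. (z, (c * fst x, snd x)) \<in> kappa_rel p}"

definition kappa_mono ::
  "('a::comm_ring_1 \<Rightarrow> 'm::ab_group_add \<Rightarrow> 'm) \<Rightarrow> 'a set \<Rightarrow> ('m \<Rightarrow> ('a \<times> 'a) set) \<Rightarrow> bool" where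
  "kappa_mono s p f \<longleftrightarrow> (\<forall>x. f x \<in> kappa p) \<and>
     (\<forall>x y. f (x + y) = kappa_add p (f x) (f y)) \<and>
     (\<forall>c x. f (s c x) = kappa_scale p c (f x)) \<and> inj f"

end

theory Submission
  imports Defs
begin

lemma ideal_0: "ring_ideal I \<Longrightarrow> 0 \<in> I" by (simp add: ring_ideal_def)
lemma ideal_add: "ring_ideal I \<Longrightarrow> x \<in> I \<Longrightarrow> y \<in> I \<Longrightarrow> x + y \<in> I" by (simp add: ring_ideal_def)
lemma ideal_mult: "ring_ideal I \<Longrightarrow> x \<in> I \<Longrightarrow> r * x \<in> I" by (simp add: ring_ideal_def)
lemma ideal_mult2: "ring_ideal I \<Longrightarrow> x \<in> I \<Longrightarrow> x * r \<in> I" by (metis ideal_mult mult.commute)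
lemma ideal_uminus: "ring_ideal I \<Longrightarrow> x \<in> I \<Longrightarrow> - x \<in> I" using ideal_mult[of I x "-1"] by simp
lemma ideal_diff: "ring_ideal I \<Longrightarrow> x \<in> I \<Longrightarrow> y \<in> I \<Longrightarrow> x - y \<in> I"
  using ideal_add[of I x "-y"] ideal_uminus[of I y] by simp
lemma ideal_UNIV: "ring_ideal UNIV" by (simp add: ring_ideal_def)
lemma ideal_colon: "ring_ideal b \<Longrightarrow> ring_ideal (colon_ideal b r)"
  unfolding ring_ideal_def colon_ideal_def by (auto simp: distrib_right mult.assoc)

lemma prime_ideal_mult: "prime_ideal p \<Longrightarrow> a \<notin> p \<Longrightarrow> b \<notin> p \<Longrightarrow> a * b \<notin> p"
  unfolding prime_ideal_def by blast

lemma gab_UNIV: "gabriel_topology F \<Longrightarrow> UNIV \<in> F"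
  unfolding gabriel_topology_def using ideal_UNIV by blast
lemma gab_up: "gabriel_topology F \<Longrightarrow> a \<in> F \<Longrightarrow> ring_ideal b \<Longrightarrow> a \<subseteq> b \<Longrightarrow> b \<in> F"
  unfolding gabriel_topology_def by blast
lemma gab_int: "gabriel_topology F \<Longrightarrow> a \<in> F \<Longrightarrow> b \<in> F \<Longrightarrow> a \<inter> b \<in> F"
  unfolding gabriel_topology_def by blast
lemma gab_3: "gabriel_topology F \<Longrightarrow> ring_ideal b \<Longrightarrow> a \<in> F \<Longrightarrow> (\<And>r. r \<in> a \<Longrightarrow> colon_ideal b r \<in> F) \<Longrightarrow> b \<in> F"
  unfolding gabriel_topology_def by blast

lemma noeth_max:
  assumes N: "noetherian_ring TYPE('a::comm_ring_1)"
    and S: "I0 \<in> S" "\<And>I. I \<in> S \<Longrightarrow> ring_ideal (I::'a set)"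
  shows "\<exists>M\<in>S. \<forall>J\<in>S. M \<subseteq> J \<longrightarrow> J = M"
proof (rule ccontr)
  assume "\<not> ?thesis"
  then have H: "\<forall>M\<in>S. \<exists>J\<in>S. M \<subset> J" by auto
  define g where "g = (\<lambda>M. SOME J. J \<in> S \<and> M \<subset> J)"
  have g: "g M \<in> S \<and> M \<subset> g M" if "M \<in> S" for M
  proof -
    have "\<exists>J. J \<in> S \<and> M \<subset> J" using H that by blast
    then show ?thesis unfolding g_def by (rule someI_ex)
  qed
  define I where "I n = (g ^^ n) I0" for n
  have IS: "I n \<in> S \<and> I n \<subset> I (Suc n)" for n
  proof (induction n)
    case 0
    have "I 0 = I0" "I (Suc 0) = g I0" by (simp_all add: I_def)
    then show ?case using S(1) g[of I0] by simp
  next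
    case (Suc n)
    have e: "I (Suc (Suc n)) = g (I (Suc n))" by (simp add: I_def)
    have "I (Suc n) \<in> S" using Suc g[of "I n"] by (simp add: I_def)
    then show ?case using e g[of "I (Suc n)"] by simp
  qed
  have ch: "\<forall>n. ring_ideal (I n) \<and> I n \<subseteq> I (Suc n)" using IS S(2) by (simp add: psubset_imp_subset)
  have Nx: "\<forall>J :: nat \<Rightarrow> 'a set. (\<forall>n. ring_ideal (J n) \<and> J n \<subseteq> J (Suc n)) \<longrightarrow> (\<exists>K. \<forall>n\<ge>K. J n = J K)"
    using N unfolding noetherian_ring_def by assumption
  have "\<exists>K. \<forall>n\<ge>K. I n = I K" using mp[OF spec[OF Nx, of I] ch] .
  then obtain K where K: "\<forall>n\<ge>K. I n = I K" ..
  have "K \<le> Suc K" by simp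
  then have "I (Suc K) = I K" using K by blast
  then show False using IS[of K] by simp
qed

lemma maxnonF_prime:
  assumes G: "gabriel_topology F" and b: "ring_ideal b" "b \<notin> F"
    and mx: "\<And>J. ring_ideal J \<Longrightarrow> b \<subset> J \<Longrightarrow> J \<in> F"
  shows "prime_ideal b"
proof -
  have "1 \<notin> b"
  proof
    assume "1 \<in> b"
    then have "b = UNIV" using ideal_mult[OF b(1), of 1] by auto
    then show False using b(2) gab_UNIV[OF G] by simp
  qed
  moreover have "x \<in> b \<or> y \<in> b" if xy: "x * y \<in> b" for x y
  proof (rule ccontr)
    assume nx: "\<not> (x \<in> b \<or> y \<in> b)"
    define bx where "bx = {\<beta> + t * x | \<beta> t. \<beta> \<in> b}"
    have bxi: "ring_ideal bx"
      unfolding ring_ideal_def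
    proof (intro conjI ballI allI)
      have "0 + 0 * x \<in> bx" unfolding bx_def using ideal_0[OF b(1)] by blast
      then show "0 \<in> bx" by simp
      fix u v assume "u \<in> bx" "v \<in> bx"
      then obtain \<beta> t \<beta>' t' where "u = \<beta> + t * x" "\<beta> \<in> b" "v = \<beta>' + t' * x" "\<beta>' \<in> b"
        unfolding bx_def by blast
      then have "u + v = (\<beta> + \<beta>') + (t + t') * x" "\<beta> + \<beta>' \<in> b"
        using ideal_add[OF b(1)] by (auto simp: algebra_simps)
      then show "u + v \<in> bx" unfolding bx_def by blast
    next
      fix r u assume "u \<in> bx"
      then obtain \<beta> t where "u = \<beta> + t * x" "\<beta> \<in> b" unfolding bx_def by blast
      then have "r * u = r * \<beta> + (r * t) * x" "r * \<beta> \<in> b"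
        using ideal_mult[OF b(1)] by (auto simp: algebra_simps)
      then show "r * u \<in> bx" unfolding bx_def by blast
    qed
    have "b \<subseteq> bx"
    proof
      fix z assume "z \<in> b"
      then have "z + 0 * x \<in> bx" unfolding bx_def by blast
      then show "z \<in> bx" by simp
    qed
    moreover have "0 + 1 * x \<in> bx" unfolding bx_def using ideal_0[OF b(1)] by blast
    then have "x \<in> bx" by simp
    ultimately have "b \<subset> bx" using nx by blast
    hence bxF: "bx \<in> F" using mx bxi by blast
    have ci: "ring_ideal (colon_ideal b x)" by (rule ideal_colon[OF b(1)])
    have "b \<subseteq> colon_ideal b x" unfolding colon_ideal_def using ideal_mult2[OF b(1)] by blast
    moreover have "y \<in> colon_ideal b x" unfolding colon_ideal_def using xy by (simp add: mult.commute)
    ultimately have "b \<subset> colon_ideal b x" using nx by blast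
    hence cx: "colon_ideal b x \<in> F" using mx ci by blast
    have "colon_ideal b r \<in> F" if "r \<in> bx" for r
    proof -
      obtain \<beta> t where r: "r = \<beta> + t * x" "\<beta> \<in> b" using \<open>r \<in> bx\<close> unfolding bx_def by blast
      have "colon_ideal b x \<subseteq> colon_ideal b r"
      proof
        fix z assume "z \<in> colon_ideal b x"
        then have "z * x \<in> b" by (simp add: colon_ideal_def)
        then have "z * \<beta> + t * (z * x) \<in> b"
          using ideal_add[OF b(1)] ideal_mult[OF b(1)] ideal_mult2[OF b(1)] r(2) by blast
        moreover have "z * r = z * \<beta> + t * (z * x)" using r(1) by (simp add: algebra_simps)
        ultimately show "z \<in> colon_ideal b r" by (simp add: colon_ideal_def)
      qed
      then show ?thesis using gab_up[OF G cx ideal_colon[OF b(1)]] by blast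
    qed
    then have "b \<in> F" using gab_3[OF G b(1) bxF] by blast
    then show False using b(2) by simp
  qed
  ultimately show ?thesis using b(1) unfolding prime_ideal_def by blast
qed

lemma above_Fstar:
  assumes N: "noetherian_ring TYPE('a::comm_ring_1)" and G: "gabriel_topology F"
    and p: "p \<in> Fstar F" and c: "ring_ideal (c::'a set)" "p \<subset> c"
  shows "c \<in> F"
proof (rule ccontr)
  assume cF: "c \<notin> F"
  define S where "S = {J. ring_ideal J \<and> c \<subseteq> J \<and> J \<notin> F}"
  have "c \<in> S" using c cF by (simp add: S_def)
  from noeth_max[OF N this] obtain b where b: "b \<in> S" "\<forall>J\<in>S. b \<subseteq> J \<longrightarrow> J = b"
    using S_def by auto
  have "prime_ideal b"
  proof (rule maxnonF_prime[OF G])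
    show "ring_ideal b" "b \<notin> F" using b(1) S_def by auto
    show "J \<in> F" if "ring_ideal J" "b \<subset> J" for J
      using b that unfolding S_def by auto
  qed
  moreover have "b \<notin> F" "p \<subseteq> b" using b(1) c(2) S_def by auto
  ultimately have "b = p" using p unfolding Fstar_def by blast
  then show False using b(1) c(2) S_def by auto
qed


definition kcl :: "'a::comm_ring_1 set \<Rightarrow> 'a \<Rightarrow> 'a \<Rightarrow> ('a \<times> 'a) set" where
  "kcl p a t = kappa_rel p `` {(a,t)}"

lemma krel_iff: "((r,t),(r',t')) \<in> kappa_rel p \<longleftrightarrow> t \<notin> p \<and> t' \<notin> p \<and> r*t' - r'*t \<in> p"
  by (simp add: kappa_rel_def)

lemma ktrans:
  assumes p: "prime_ideal p" and h: "((a,b),(c,d)) \<in> kappa_rel p" "((c,d),(e,f)) \<in> kappa_rel p"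
  shows "((a,b),(e,f)) \<in> kappa_rel p"
proof -
  have I: "ring_ideal p" using p prime_ideal_def by auto
  have h1: "a*d - c*b \<in> p" "c*f - e*d \<in> p" "b \<notin> p" "d \<notin> p" "f \<notin> p" using h by (auto simp: krel_iff)
  have "f*(a*d - c*b) + b*(c*f - e*d) \<in> p" using I h1 ideal_add ideal_mult by blast
  moreover have "f*(a*d - c*b) + b*(c*f - e*d) = d*(a*f - e*b)" by (simp add: algebra_simps)
  ultimately have "d*(a*f - e*b) \<in> p" by simp
  then have "a*f - e*b \<in> p" using p h1(4) unfolding prime_ideal_def by blast
  then show ?thesis using h1 by (simp add: krel_iff)
qed

lemma ksym:
  assumes p: "prime_ideal p" and h: "((a,b),(c,d)) \<in> kappa_rel p"
  shows "((c,d),(a,b)) \<in> kappa_rel p"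
proof -
  have I: "ring_ideal p" using p prime_ideal_def by auto
  have h1: "a*d - c*b \<in> p" "b \<notin> p" "d \<notin> p" using h by (auto simp: krel_iff)
  have "-(a*d - c*b) \<in> p" using ideal_uminus[OF I h1(1)] .
  then have "c*b - a*d \<in> p" by simp
  then show ?thesis using h1 by (simp add: krel_iff)
qed

lemma krefl: "prime_ideal p \<Longrightarrow> b \<notin> p \<Longrightarrow> ((a,b),(a,b)) \<in> kappa_rel p"
  by (auto simp: krel_iff prime_ideal_def ideal_0)

lemma kequiv:
  assumes p: "prime_ideal (p::'a::comm_ring_1 set)" shows "equiv {(r::'a,t). t \<notin> p} (kappa_rel p)"
  unfolding equiv_def refl_on_def sym_def trans_def
proof (intro conjI allI impI ballI)
  show "kappa_rel p \<subseteq> {(r,t). t \<notin> p} \<times> {(r,t). t \<notin> p}" by (auto simp: kappa_rel_def)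
next
  fix x :: "'a \<times> 'a" assume "x \<in> {(r,t). t \<notin> p}" then show "(x,x) \<in> kappa_rel p" using krefl[OF p, of "snd x" "fst x"] by auto
next
  fix x y assume "(x,y) \<in> kappa_rel p" then show "(y,x) \<in> kappa_rel p"
    using ksym[OF p, of "fst x" "snd x" "fst y" "snd y"] by simp
next
  fix x y z assume "(x,y) \<in> kappa_rel p" "(y,z) \<in> kappa_rel p" then show "(x,z) \<in> kappa_rel p"
    using ktrans[OF p, of "fst x" "snd x" "fst y" "snd y" "fst z" "snd z"] by simp
qed

lemma ksym': "prime_ideal p \<Longrightarrow> (x,y) \<in> kappa_rel p \<Longrightarrow> (y,x) \<in> kappa_rel p"
  using kequiv unfolding equiv_def sym_def by blast
lemma ktrans': "prime_ideal p \<Longrightarrow> (x,y) \<in> kappa_rel p \<Longrightarrow> (y,z) \<in> kappa_rel p \<Longrightarrow> (x,z) \<in> kappa_rel p"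
  using kequiv unfolding equiv_def trans_def by blast

lemma kcl_eq:
  assumes p: "prime_ideal p" and t: "t \<notin> p" "t' \<notin> p"
  shows "kcl p a t = kcl p a' t' \<longleftrightarrow> a*t' - a'*t \<in> p"
  unfolding kcl_def using eq_equiv_class_iff[OF kequiv[OF p], of "(a,t)" "(a',t')"] t
  by (simp add: krel_iff)

lemma kcl_in: "t \<notin> p \<Longrightarrow> kcl p a t \<in> kappa p"
  unfolding kcl_def kappa_def by (rule quotientI) simp

lemma kappa_cases: "X \<in> kappa p \<Longrightarrow> \<exists>a t. t \<notin> p \<and> X = kcl p a t"
  unfolding kappa_def kcl_def by (erule quotientE) auto

lemma kzero: "prime_ideal p \<Longrightarrow> t \<notin> p \<Longrightarrow> kcl p a t = kcl p 0 1 \<longleftrightarrow> a \<in> p"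
  using kcl_eq[of p t 1 a 0] by (simp add: prime_ideal_def)

lemma kscale:
  assumes p: "prime_ideal p" and t: "t \<notin> p"
  shows "kappa_scale p c (kcl p a t) = kcl p (c*a) t"
proof (rule set_eqI)
  fix z
  have I: "ring_ideal p" using p prime_ideal_def by auto
  show "z \<in> kappa_scale p c (kcl p a t) \<longleftrightarrow> z \<in> kcl p (c*a) t"
  proof
    assume "z \<in> kappa_scale p c (kcl p a t)"
    then obtain x where x: "((a,t),x) \<in> kappa_rel p" "(z, (c*fst x, snd x)) \<in> kappa_rel p"
      by (auto simp: kappa_scale_def kcl_def)
    obtain a' t' where xe: "x = (a',t')" by fastforce
    have h: "a*t' - a'*t \<in> p" "t \<notin> p" "t' \<notin> p" using x(1) xe by (auto simp: krel_iff)
    have "c*a*t' - c*a'*t = c*(a*t' - a'*t)" by (simp add: algebra_simps)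
    then have "((c*a,t),(c*a',t')) \<in> kappa_rel p" using h ideal_mult[OF I h(1)] by (simp add: krel_iff)
    moreover have "((c*a',t'), z) \<in> kappa_rel p" using ksym'[OF p x(2)] xe by simp
    ultimately have "((c*a,t), z) \<in> kappa_rel p" using ktrans'[OF p] by blast
    then show "z \<in> kcl p (c*a) t" by (simp add: kcl_def)
  next
    assume "z \<in> kcl p (c*a) t"
    then have "(z, (c*a,t)) \<in> kappa_rel p" using ksym'[OF p] by (simp add: kcl_def)
    moreover have "(a,t) \<in> kcl p a t" using krefl[OF p t] by (simp add: kcl_def)
    ultimately have "\<exists>x\<in>kcl p a t. (z, (c*fst x, snd x)) \<in> kappa_rel p"
      by (intro bexI[of _ "(a,t)"]) simp_all
    then show "z \<in> kappa_scale p c (kcl p a t)" unfolding kappa_scale_def by simp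
  qed
qed

lemma kadd_rel:
  assumes p: "prime_ideal p" and h: "((a,t),(x1,x2)) \<in> kappa_rel p" "((b,t'),(y1,y2)) \<in> kappa_rel p"
  shows "((a*t'+b*t, t*t'), (x1*y2 + y1*x2, x2*y2)) \<in> kappa_rel p"
proof -
  have I: "ring_ideal p" using p prime_ideal_def by auto
  have h1: "a*x2 - x1*t \<in> p" "b*y2 - y1*t' \<in> p" "t \<notin> p" "t' \<notin> p" "x2 \<notin> p" "y2 \<notin> p"
    using h by (auto simp: krel_iff)
  have "y2*t'*(a*x2 - x1*t) + x2*t*(b*y2 - y1*t') \<in> p" using I h1 ideal_add ideal_mult by blast
  moreover have "y2*t'*(a*x2 - x1*t) + x2*t*(b*y2 - y1*t') = (a*t'+b*t)*(x2*y2) - (x1*y2 + y1*x2)*(t*t')"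
    by (simp add: algebra_simps)
  ultimately show ?thesis using h1 prime_ideal_mult[OF p] by (simp add: krel_iff)
qed

lemma kadd:
  assumes p: "prime_ideal p" and t: "t \<notin> p" "t' \<notin> p"
  shows "kappa_add p (kcl p a t) (kcl p b t') = kcl p (a*t' + b*t) (t*t')"
proof (rule set_eqI)
  fix z
  show "z \<in> kappa_add p (kcl p a t) (kcl p b t') \<longleftrightarrow> z \<in> kcl p (a*t' + b*t) (t*t')"
  proof
    assume "z \<in> kappa_add p (kcl p a t) (kcl p b t')"
    then obtain x y where xy: "((a,t),x) \<in> kappa_rel p" "((b,t'),y) \<in> kappa_rel p"
      "(z, (fst x * snd y + fst y * snd x, snd x * snd y)) \<in> kappa_rel p"
      by (auto simp: kappa_add_def kcl_def)
    obtain x1 x2 where xe: "x = (x1,x2)" by fastforce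
    obtain y1 y2 where ye: "y = (y1,y2)" by fastforce
    have "((a*t'+b*t, t*t'), (x1*y2 + y1*x2, x2*y2)) \<in> kappa_rel p"
      using kadd_rel[OF p] xy(1,2) xe ye by simp
    moreover have "((x1*y2 + y1*x2, x2*y2), z) \<in> kappa_rel p" using ksym'[OF p xy(3)] xe ye by simp
    ultimately have "((a*t'+b*t, t*t'), z) \<in> kappa_rel p" using ktrans'[OF p] by blast
    then show "z \<in> kcl p (a*t' + b*t) (t*t')" by (simp add: kcl_def)
  next
    assume "z \<in> kcl p (a*t' + b*t) (t*t')"
    then have "(z, (a*t' + b*t, t*t')) \<in> kappa_rel p" using ksym'[OF p] by (simp add: kcl_def)
    moreover have "(a,t) \<in> kcl p a t" using krefl[OF p t(1)] by (simp add: kcl_def)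
    moreover have "(b,t') \<in> kcl p b t'" using krefl[OF p t(2)] by (simp add: kcl_def)
    ultimately have "\<exists>x\<in>kcl p a t. \<exists>y\<in>kcl p b t'.
      (z, (fst x * snd y + fst y * snd x, snd x * snd y)) \<in> kappa_rel p"
      by (intro bexI[of _ "(a,t)"] bexI[of _ "(b,t')"]) simp_all
    then show "z \<in> kappa_add p (kcl p a t) (kcl p b t')" unfolding kappa_add_def by simp
  qed
qed

locale modl =
  fixes s :: "'a::comm_ring_1 \<Rightarrow> 'm::ab_group_add \<Rightarrow> 'm"
  assumes ism: "is_module s"
begin

lemma sadd: "s a (x + y) = s a x + s a y" using ism by (simp add: is_module_def)
lemma sadd2: "s (a + b) x = s a x + s b x" using ism by (simp add: is_module_def)
lemma smult: "s a (s b x) = s (a * b) x" using ism by (simp add: is_module_def)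
lemma sone: "s 1 x = x" using ism by (simp add: is_module_def)
lemma szero: "s a 0 = 0" using sadd[of a 0 0] by simp
lemma szero2: "s 0 x = 0" using sadd2[of 0 0 x] by simp
lemma sminus: "s a (- x) = - s a x"
proof -
  have "s a x + s a (-x) = 0" using sadd[of a x "-x"] szero by simp
  then show ?thesis using minus_unique by metis
qed
lemma sminus2: "s (- a) x = - s a x"
proof -
  have "s a x + s (-a) x = 0" using sadd2[of a "-a" x] szero2 by simp
  then show ?thesis using minus_unique by metis
qed
lemma sdiff: "s a (x - y) = s a x - s a y" using sadd[of a x "-y"] sminus by simp
lemma sdiff2: "s (a - b) x = s a x - s b x" using sadd2[of a "-b" x] sminus2 by simp
lemma scomm: "s a (s b x) = s b (s a x)" by (simp add: smult mult.commute)

lemma sub_cyc: "submodule s (range (\<lambda>t. s t x))"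
  unfolding submodule_def
proof (intro conjI ballI allI)
  show "0 \<in> range (\<lambda>t. s t x)" by (rule range_eqI[of _ _ 0]) (simp add: szero2)
  fix u v assume "u \<in> range (\<lambda>t. s t x)" "v \<in> range (\<lambda>t. s t x)"
  then obtain a b where ab: "u = s a x" "v = s b x" by blast
  then have "u + v = s (a + b) x" by (simp add: sadd2)
  then show "u + v \<in> range (\<lambda>t. s t x)" by (rule range_eqI)
next
  fix c u assume "u \<in> range (\<lambda>t. s t x)"
  then obtain a where "u = s a x" by blast
  then have "s c u = s (c * a) x" by (simp add: smult)
  then show "s c u \<in> range (\<lambda>t. s t x)" by (rule range_eqI)
qed

lemma sub_cyc_ideal:
  assumes q: "ring_ideal q" shows "submodule s ((\<lambda>t. s t x) ` q)"
  unfolding submodule_def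
proof (intro conjI ballI allI)
  show "0 \<in> (\<lambda>t. s t x) ` q" by (rule image_eqI[of _ _ 0]) (simp_all add: szero2 ideal_0[OF q])
  fix u v assume "u \<in> (\<lambda>t. s t x) ` q" "v \<in> (\<lambda>t. s t x) ` q"
  then obtain a b where ab: "u = s a x" "v = s b x" "a \<in> q" "b \<in> q" by blast
  then have "u + v = s (a + b) x" by (simp add: sadd2)
  moreover have "a + b \<in> q" using ab ideal_add[OF q] by blast
  ultimately show "u + v \<in> (\<lambda>t. s t x) ` q" by (rule image_eqI)
next
  fix c u assume "u \<in> (\<lambda>t. s t x) ` q"
  then obtain a where a: "u = s a x" "a \<in> q" by blast
  then have "s c u = s (c * a) x" by (simp add: smult)
  moreover have "c * a \<in> q" using a ideal_mult[OF q] by blast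
  ultimately show "s c u \<in> (\<lambda>t. s t x) ` q" by (rule image_eqI)
qed

lemma sub_kernel: "submodule s {x. s r x = 0}"
  unfolding submodule_def
proof (intro conjI ballI allI)
  show "0 \<in> {x. s r x = 0}" by (simp add: szero)
  fix u v assume "u \<in> {x. s r x = 0}" "v \<in> {x. s r x = 0}"
  then show "u + v \<in> {x. s r x = 0}" by (simp add: sadd)
next
  fix c u assume u: "u \<in> {x. s r x = 0}"
  have "s r (s c u) = s c (s r u)" by (rule scomm)
  also have "\<dots> = 0" using u by (simp add: szero)
  finally show "s c u \<in> {x. s r x = 0}" by simp
qed

lemma ann_ideal: "ring_ideal (Ann s)"
  unfolding ring_ideal_def Ann_def
proof (intro conjI ballI allI)
  show "0 \<in> {r. \<forall>x. s r x = 0}" by (simp add: szero2)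
  fix a b assume "a \<in> {r. \<forall>x. s r x = 0}" "b \<in> {r. \<forall>x. s r x = 0}"
  then show "a + b \<in> {r. \<forall>x. s r x = 0}" by (simp add: sadd2)
next
  fix c a assume a: "a \<in> {r. \<forall>x. s r x = 0}"
  have "s (c * a) x = 0" for x
  proof -
    have "s (c * a) x = s c (s a x)" by (simp add: smult)
    also have "\<dots> = 0" using a by (simp add: szero)
    finally show ?thesis .
  qed
  then show "c * a \<in> {r. \<forall>x. s r x = 0}" by simp
qed

lemma cideal:
  assumes U: "submodule s U" shows "ring_ideal {t. s t x \<in> U}"
  unfolding ring_ideal_def
proof (intro conjI ballI allI)
  show "0 \<in> {t. s t x \<in> U}" using U by (simp add: szero2 submodule_def)
  fix a b assume "a \<in> {t. s t x \<in> U}" "b \<in> {t. s t x \<in> U}"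
  then show "a + b \<in> {t. s t x \<in> U}" using U by (simp add: sadd2 submodule_def)
next
  fix c a assume a: "a \<in> {t. s t x \<in> U}"
  have "s (c * a) x = s c (s a x)" by (simp add: smult)
  moreover have "s c (s a x) \<in> U" using a U unfolding submodule_def by blast
  ultimately show "c * a \<in> {t. s t x \<in> U}" by simp
qed

lemma uni:
  assumes um: "uniform_module s" and U: "submodule s U" and V: "submodule s V"
    and U0: "U \<noteq> {0}" and V0: "V \<noteq> {0}"
  shows "\<exists>y. y \<in> U \<and> y \<in> V \<and> y \<noteq> 0"
proof -
  have "\<forall>U V. submodule s U \<and> submodule s V \<and> U \<noteq> {0} \<and> V \<noteq> {0} \<longrightarrow> U \<inter> V \<noteq> {0}"
    using um by (simp add: uniform_module_def)
  then have "U \<inter> V \<noteq> {0}" using U V U0 V0 by blast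
  moreover have "0 \<in> U" "0 \<in> V" using U V unfolding submodule_def by simp_all
  ultimately show ?thesis by auto
qed

lemma sub_nz: "submodule s U \<Longrightarrow> U \<noteq> {0} \<Longrightarrow> \<exists>u\<in>U. u \<noteq> 0"
  unfolding submodule_def by blast

lemma pm_inj: "prime_module s \<Longrightarrow> r \<notin> Ann s \<Longrightarrow> inj (s r)"
  unfolding prime_module_def Ann_def by blast

lemma pm_ann:
  assumes pm: "prime_module s" and x: "x \<noteq> 0" and r: "s r x = 0" shows "r \<in> Ann s"
proof (rule ccontr)
  assume "r \<notin> Ann s"
  then have i: "inj (s r)" using pm_inj[OF pm] by blast
  have "s r x = s r 0" using r by (simp add: szero)
  then have "x = 0" using injD[OF i] by blast
  then show False using x by simp
qed

lemma pm_prime: assumes pm: "prime_module s" shows "prime_ideal (Ann s)"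
proof -
  obtain x :: 'm where x: "x \<noteq> 0" using pm unfolding prime_module_def by auto
  have "1 \<notin> Ann s" using x sone unfolding Ann_def by auto
  moreover have "a \<in> Ann s \<or> b \<in> Ann s" if "a * b \<in> Ann s" for a b
  proof (rule ccontr)
    assume n: "\<not> (a \<in> Ann s \<or> b \<in> Ann s)"
    then obtain y where "s b y \<noteq> 0" unfolding Ann_def by auto
    moreover have "s a (s b y) = 0" using that smult unfolding Ann_def by simp
    ultimately have "a \<in> Ann s" using pm_ann[OF pm] by blast
    then show False using n by simp
  qed
  ultimately show ?thesis unfolding prime_ideal_def using ann_ideal by blast
qed

definition sat :: "'a set set \<Rightarrow> 'm set \<Rightarrow> 'm set" where
  "sat F U = {x. \<exists>a\<in>F. \<forall>t\<in>a. s t x \<in> U}"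

lemma sat_sub:
  assumes G: "gabriel_topology F" and U: "submodule s U"
  shows "submodule s (sat F U)"
  unfolding submodule_def
proof (intro conjI ballI allI)
  have "\<forall>t\<in>UNIV. s t 0 \<in> U" using U by (simp add: szero submodule_def)
  then show "0 \<in> sat F U" unfolding sat_def using gab_UNIV[OF G] by blast
  fix x y assume "x \<in> sat F U" "y \<in> sat F U"
  then obtain a b where ab: "a \<in> F" "\<forall>t\<in>a. s t x \<in> U" "b \<in> F" "\<forall>t\<in>b. s t y \<in> U"
    unfolding sat_def by blast
  have "a \<inter> b \<in> F" using gab_int[OF G ab(1,3)] .
  moreover have "\<forall>t\<in>a \<inter> b. s t (x + y) \<in> U" using ab U by (auto simp: sadd submodule_def)
  ultimately show "x + y \<in> sat F U" unfolding sat_def by blast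
next
  fix c x assume "x \<in> sat F U"
  then obtain a where a: "a \<in> F" "\<forall>t\<in>a. s t x \<in> U" unfolding sat_def by blast
  have "s t (s c x) \<in> U" if "t \<in> a" for t
  proof -
    have "s t (s c x) = s c (s t x)" by (rule scomm)
    moreover have "s t x \<in> U" using a that by blast
    ultimately show ?thesis using U unfolding submodule_def by simp
  qed
  then have "\<forall>t\<in>a. s t (s c x) \<in> U" by blast
  then show "s c x \<in> sat F U" using a(1) unfolding sat_def by blast
qed

lemma sat_sup:
  assumes G: "gabriel_topology F" and U: "submodule s U" shows "U \<subseteq> sat F U"
proof
  fix x assume x: "x \<in> U"
  have "\<forall>t\<in>UNIV. s t x \<in> U" using x U unfolding submodule_def by blast
  then show "x \<in> sat F U" unfolding sat_def using gab_UNIV[OF G] by blast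
qed

lemma sat_tf:
  assumes G: "gabriel_topology F" and U: "submodule s U"
  shows "quot_F_torsion_free s F (sat F U)"
  unfolding quot_F_torsion_free_def
proof (intro ballI allI impI)
  fix a x assume a: "a \<in> F" and h: "\<forall>r\<in>a. s r x \<in> sat F U"
  define c where "c = {t. s t x \<in> U}"
  have ci: "ring_ideal c" unfolding c_def by (rule cideal[OF U])
  have "colon_ideal c r \<in> F" if r: "r \<in> a" for r
  proof -
    obtain b where b: "b \<in> F" "\<forall>t\<in>b. s t (s r x) \<in> U" using h r unfolding sat_def by blast
    have "b \<subseteq> colon_ideal c r"
    proof
      fix t assume "t \<in> b"
      then have "s t (s r x) \<in> U" using b(2) by blast
      then have "s (t * r) x \<in> U" by (simp add: smult)
      then show "t \<in> colon_ideal c r" by (simp add: colon_ideal_def c_def)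
    qed
    then show ?thesis using gab_up[OF G b(1) ideal_colon[OF ci]] by blast
  qed
  then have "c \<in> F" using gab_3[OF G ci a] by blast
  moreover have "\<forall>t\<in>c. s t x \<in> U" by (simp add: c_def)
  ultimately show "x \<in> sat F U" unfolding sat_def by blast
qed

lemma i_ii:
  assumes G: "gabriel_topology F" and S: "simple_F_torsion_free s F"
  shows "prime_module s \<and> uniform_module s \<and> Ann s \<in> Fstar F"
proof -
  have nz: "(UNIV::'m set) \<noteq> {0}" and tf: "F_torsion_free s F"
    and sm: "\<And>U. submodule s U \<Longrightarrow> U \<noteq> {0} \<Longrightarrow> U \<noteq> UNIV \<Longrightarrow> \<not> quot_F_torsion_free s F U"
    using S unfolding simple_F_torsion_free_def by auto
  have satU: "sat F U = UNIV" if "submodule s U" "U \<noteq> {0}" for U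
  proof (rule ccontr)
    assume ne: "sat F U \<noteq> UNIV"
    have "sat F U \<noteq> {0}" using sat_sup[OF G that(1)] sub_nz[OF that] by blast
    then show False using sm[OF sat_sub[OF G that(1)] _ ne] sat_tf[OF G that(1)] by blast
  qed
  have tf': "x = 0" if "a \<in> F" "\<forall>t\<in>a. s t x = 0" for a x
    using tf that unfolding F_torsion_free_def ann_sub_def by blast
  have pm: "prime_module s"
    unfolding prime_module_def
  proof (intro conjI allI nz)
    fix r
    let ?U = "{x. s r x = 0}"
    have sub: "submodule s ?U" by (rule sub_kernel)
    have q: "quot_F_torsion_free s F ?U"
      unfolding quot_F_torsion_free_def
    proof (intro ballI allI impI)
      fix a x assume a: "a \<in> F" and h: "\<forall>t\<in>a. s t x \<in> ?U"
      have "\<forall>t\<in>a. s t (s r x) = 0" using h scomm by simp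
      then have "s r x = 0" using tf' a by blast
      then show "x \<in> ?U" by simp
    qed
    show "(\<forall>x. s r x = 0) \<or> inj (s r)"
    proof (cases "?U = UNIV")
      case True then show ?thesis by auto
    next
      case False
      then have U0: "?U = {0}" using sm[OF sub _ False] q by blast
      have "inj (s r)"
      proof (rule injI)
        fix x y assume "s r x = s r y"
        then have "s r (x - y) = 0" by (simp add: sdiff)
        then have "x - y \<in> ?U" by simp
        then show "x = y" using U0 by auto
      qed
      then show ?thesis by blast
    qed
  qed
  have um: "uniform_module s"
    unfolding uniform_module_def
  proof (intro conjI allI impI nz)
    fix U V assume h: "submodule s U \<and> submodule s V \<and> U \<noteq> {0} \<and> V \<noteq> {0}"
    show "U \<inter> V \<noteq> {0}"
    proof
      assume UV: "U \<inter> V = {0}"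
      obtain v where v: "v \<in> V" "v \<noteq> 0" using h sub_nz by blast
      have "v \<in> sat F U" using satU h by auto
      then obtain a where a: "a \<in> F" "\<forall>t\<in>a. s t v \<in> U" unfolding sat_def by auto
      have "s t v = 0" if "t \<in> a" for t
      proof -
        have "s t v \<in> U" using a(2) that by blast
        moreover have "s t v \<in> V" using h v(1) unfolding submodule_def by blast
        ultimately have "s t v \<in> U \<inter> V" by blast
        then show ?thesis using UV by simp
      qed
      then show False using tf' a(1) v(2) by blast
    qed
  qed
  have pA: "prime_ideal (Ann s)" by (rule pm_prime[OF pm])
  have AF: "Ann s \<notin> F"
  proof
    assume AF: "Ann s \<in> F"
    obtain x::'m where "x \<noteq> 0" using nz by auto
    moreover have "\<forall>t\<in>Ann s. s t x = 0" by (simp add: Ann_def)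
    ultimately show False using tf' AF by blast
  qed
  have mx: "q = Ann s" if q: "prime_ideal q" "q \<notin> F" "Ann s \<subseteq> q" for q
  proof (rule ccontr)
    assume "q \<noteq> Ann s"
    then obtain r where r: "r \<in> q" "r \<notin> Ann s" using q(3) by blast
    obtain x::'m where x: "x \<noteq> 0" using nz by auto
    have qi: "ring_ideal q" using q(1) prime_ideal_def by auto
    let ?U = "(\<lambda>t. s t x) ` q"
    have sub: "submodule s ?U" by (rule sub_cyc_ideal[OF qi])
    have "s r x \<noteq> 0" using pm_ann[OF pm x] r(2) by blast
    hence "?U \<noteq> {0}" using r(1) by blast
    hence "x \<in> sat F ?U" using satU sub by auto
    then obtain a where a: "a \<in> F" "\<forall>t\<in>a. s t x \<in> ?U" unfolding sat_def by auto
    have "a \<subseteq> q"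
    proof
      fix t assume "t \<in> a"
      then obtain u where u: "u \<in> q" "s t x = s u x" using a(2) by auto
      have "s (t - u) x = 0" using u(2) by (simp add: sdiff2)
      hence "t - u \<in> Ann s" using pm_ann[OF pm x] by blast
      hence "t - u \<in> q" using q(3) by blast
      hence "(t - u) + u \<in> q" using ideal_add[OF qi] u(1) by blast
      thus "t \<in> q" by simp
    qed
    hence "q \<in> F" using gab_up[OF G a(1) qi] by blast
    thus False using q(2) by simp
  qed
  have "Ann s \<in> Fstar F" unfolding Fstar_def using pA AF mx by blast
  then show ?thesis using pm um by blast
qed

lemma ii_i:
  assumes N: "noetherian_ring TYPE('a)" and G: "gabriel_topology F"
    and pm: "prime_module s" and um: "uniform_module s" and A: "Ann s \<in> Fstar F"
  shows "simple_F_torsion_free s F"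
proof -
  have nz: "(UNIV::'m set) \<noteq> {0}" using pm prime_module_def by auto
  have AF: "Ann s \<notin> F" using A Fstar_def by auto
  have Ai: "ring_ideal (Ann s)" by (rule ann_ideal)
  have z: "x = 0" if "a \<in> F" "\<forall>r\<in>a. s r x = 0" for a x
  proof (rule ccontr)
    assume "x \<noteq> 0"
    then have "a \<subseteq> Ann s" using pm_ann[OF pm] that(2) by blast
    then have "Ann s \<in> F" using gab_up[OF G that(1) Ai] by blast
    then show False using AF by simp
  qed
  have tf: "F_torsion_free s F"
    unfolding F_torsion_free_def ann_sub_def
  proof
    fix a assume a: "a \<in> F"
    show "{x. \<forall>r\<in>a. s r x = 0} = {0}"
    proof (rule set_eqI)
      fix x show "x \<in> {x. \<forall>r\<in>a. s r x = 0} \<longleftrightarrow> x \<in> {0}"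
      proof
        assume "x \<in> {x. \<forall>r\<in>a. s r x = 0}"
        then have "x = 0" using z[OF a] by blast
        then show "x \<in> {0}" by blast
      next
        assume "x \<in> {0}" then show "x \<in> {x. \<forall>r\<in>a. s r x = 0}" by (simp add: szero)
      qed
    qed
  qed
  have "\<not> quot_F_torsion_free s F U" if U: "submodule s U" "U \<noteq> {0}" "U \<noteq> UNIV" for U
  proof
    assume q: "quot_F_torsion_free s F U"
    obtain x where x: "x \<notin> U" using U(3) by auto
    have "0 \<in> U" using U(1) unfolding submodule_def by blast
    then have x0: "x \<noteq> 0" using x by auto
    define c where "c = {t. s t x \<in> U}"
    have ci: "ring_ideal c" unfolding c_def by (rule cideal[OF U(1)])
    have U0: "0 \<in> U" using U(1) unfolding submodule_def by blast
    have pc: "Ann s \<subseteq> c"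
    proof
      fix r assume "r \<in> Ann s"
      then have "s r x = 0" by (simp add: Ann_def)
      then show "r \<in> c" using U0 by (simp add: c_def)
    qed
    have cyc: "submodule s (range (\<lambda>t. s t x))" by (rule sub_cyc)
    have "x \<in> range (\<lambda>t. s t x)" by (rule range_eqI[of _ _ 1]) (simp add: sone)
    then have "range (\<lambda>t. s t x) \<noteq> {0}" using x0 by blast
    then obtain y where y: "y \<in> range (\<lambda>t. s t x)" "y \<in> U" "y \<noteq> 0"
      using uni[OF um cyc U(1) _ U(2)] by blast
    then obtain t where t: "y = s t x" by auto
    have tc: "t \<in> c" using y(2) t by (simp add: c_def)
    have tA: "t \<notin> Ann s" using y(3) t by (auto simp: Ann_def)
    have "Ann s \<noteq> c" using tc tA by blast
    then have "Ann s \<subset> c" using pc by (rule psubsetI[rotated])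
    hence cF: "c \<in> F" using above_Fstar[OF N G A ci] by blast
    have "\<forall>r\<in>c. s r x \<in> U" by (simp add: c_def)
    hence "x \<in> U" using q cF unfolding quot_F_torsion_free_def by blast
    thus False using x by simp
  qed
  then show ?thesis unfolding simple_F_torsion_free_def using nz tf by blast
qed

lemma iii_ii:
  assumes p: "p \<in> Fstar F" and f: "kappa_mono s p f" and nz: "(UNIV::'m set) \<noteq> {0}"
  shows "prime_module s \<and> uniform_module s \<and> Ann s \<in> Fstar F"
proof -
  have pp: "prime_ideal p" using p Fstar_def by auto
  have I: "ring_ideal p" using pp prime_ideal_def by auto
  have p1: "1 \<notin> p" using pp prime_ideal_def by auto
  have km: "(\<forall>x. f x \<in> kappa p) \<and> (\<forall>c x. f (s c x) = kappa_scale p c (f x)) \<and> inj f"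
    using f unfolding kappa_mono_def by blast
  have fin: "f x \<in> kappa p" for x using km by blast
  have fsc: "f (s c x) = kappa_scale p c (f x)" for c x using km by blast
  have finj: "inj f" using km by blast
  have rep: "\<exists>a t. t \<notin> p \<and> f x = kcl p a t" for x using kappa_cases[OF fin] .
  have f0: "f 0 = kcl p 0 1"
  proof -
    obtain a t where at: "t \<notin> p" "f 0 = kcl p a t" using rep by blast
    have "f 0 = f (s 0 0)" by (simp add: szero)
    also have "\<dots> = kcl p (0*a) t" using fsc at kscale[OF pp at(1)] by simp
    also have "\<dots> = kcl p 0 1" using kcl_eq[OF pp at(1) p1] ideal_0[OF I] by simp
    finally show ?thesis .
  qed
  have isz: "f x = f 0 \<longleftrightarrow> x = 0" for x using finj by (auto dest: injD)
  have kz: "x = 0 \<longleftrightarrow> a \<in> p" if "t \<notin> p" "f x = kcl p a t" for x a t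
    using isz[of x] f0 kzero[OF pp that(1)] that(2) by simp
  have ann1: "s r x = 0" if "r \<in> p" for r x
  proof -
    obtain a t where at: "t \<notin> p" "f x = kcl p a t" using rep by blast
    have "f (s r x) = kcl p (r*a) t" using fsc at kscale[OF pp at(1)] by simp
    moreover have "r*a \<in> p" using ideal_mult2[OF I that] .
    ultimately show ?thesis using kz at(1) by blast
  qed
  have ann2: "x = 0" if "r \<notin> p" "s r x = 0" for r x
  proof -
    obtain a t where at: "t \<notin> p" "f x = kcl p a t" using rep by blast
    have "f (s r x) = kcl p (r*a) t" using fsc at kscale[OF pp at(1)] by simp
    then have "r*a \<in> p" using kz at(1) that(2) by blast
    then have "a \<in> p" using pp that(1) unfolding prime_ideal_def by blast
    then show ?thesis using kz at by blast
  qed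
  have Ap: "Ann s = p"
  proof
    show "p \<subseteq> Ann s" using ann1 unfolding Ann_def by blast
    show "Ann s \<subseteq> p"
    proof
      fix r assume r: "r \<in> Ann s"
      obtain x::'m where "x \<noteq> 0" using nz by auto
      moreover have "s r x = 0" using r unfolding Ann_def by blast
      ultimately show "r \<in> p" using ann2 by blast
    qed
  qed
  have pm: "prime_module s"
    unfolding prime_module_def
  proof (intro conjI allI nz)
    fix r show "(\<forall>x. s r x = 0) \<or> inj (s r)"
    proof (cases "r \<in> p")
      case True then show ?thesis using ann1 by blast
    next
      case False
      have "inj (s r)"
      proof (rule injI)
        fix x y assume "s r x = s r y"
        then have "s r (x - y) = 0" by (simp add: sdiff)
        then show "x = y" using ann2[OF False] by fastforce
      qed
      then show ?thesis by blast
    qed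
  qed
  have um: "uniform_module s"
    unfolding uniform_module_def
  proof (intro conjI allI impI nz)
    fix U V assume h: "submodule s U \<and> submodule s V \<and> U \<noteq> {0} \<and> V \<noteq> {0}"
    obtain u where u: "u \<in> U" "u \<noteq> 0" using h sub_nz by blast
    obtain v where v: "v \<in> V" "v \<noteq> 0" using h sub_nz by blast
    obtain a t where at: "t \<notin> p" "f u = kcl p a t" using rep by blast
    obtain b t' where bt: "t' \<notin> p" "f v = kcl p b t'" using rep by blast
    have a: "a \<notin> p" using kz at u(2) by blast
    have b: "b \<notin> p" using kz bt v(2) by blast
    have "f (s (b*t) u) = kcl p (b*t*a) t" using fsc at kscale[OF pp at(1)] by simp
    moreover have "f (s (a*t') v) = kcl p (a*t'*b) t'" using fsc bt kscale[OF pp bt(1)] by simp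
    moreover have "b*t*a*t' - a*t'*b*t = 0" by (simp add: algebra_simps)
    then have "kcl p (b*t*a) t = kcl p (a*t'*b) t'"
      using kcl_eq[OF pp at(1) bt(1)] ideal_0[OF I] by simp
    ultimately have eq: "s (b*t) u = s (a*t') v" using injD[OF finj] by simp
    have "s (b*t) u \<noteq> 0" using ann2 prime_ideal_mult[OF pp b at(1)] u(2) by blast
    moreover have "s (b*t) u \<in> U" using h u(1) unfolding submodule_def by blast
    moreover have "s (a*t') v \<in> V" using h v(1) unfolding submodule_def by blast
    then have "s (b*t) u \<in> V" using eq by simp
    ultimately show "U \<inter> V \<noteq> {0}" by blast
  qed
  show ?thesis using pm um Ap p by simp
qed

lemma ii_iii:
  assumes pm: "prime_module s" and um: "uniform_module s" and A: "Ann s \<in> Fstar F"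
  shows "(\<exists>p\<in>Fstar F. \<exists>f. kappa_mono s p f) \<and> (UNIV::'m set) \<noteq> {0}"
proof -
  have nz: "(UNIV::'m set) \<noteq> {0}" using pm prime_module_def by auto
  define p where "p = Ann s"
  have pp: "prime_ideal p" using pm_prime[OF pm] p_def by simp
  have I: "ring_ideal p" using pp prime_ideal_def by auto
  have p1: "1 \<notin> p" using pp prime_ideal_def by auto
  obtain m0::'m where m0: "m0 \<noteq> 0" using nz by auto
  have ex: "\<exists>a t. t \<notin> p \<and> s t x = s a m0" for x
  proof (cases "x = 0")
    case True then show ?thesis using p1 by (intro exI[of _ 0] exI[of _ 1]) (simp add: szero szero2)
  next
    case False
    have "x \<in> range (\<lambda>t. s t x)" by (rule range_eqI[of _ _ 1]) (simp add: sone)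
    then have r1: "range (\<lambda>t. s t x) \<noteq> {0}" using False by blast
    have "m0 \<in> range (\<lambda>t. s t m0)" by (rule range_eqI[of _ _ 1]) (simp add: sone)
    then have r2: "range (\<lambda>t. s t m0) \<noteq> {0}" using m0 by blast
    obtain y where y: "y \<in> range (\<lambda>t. s t x)" "y \<in> range (\<lambda>t. s t m0)" "y \<noteq> 0"
      using uni[OF um sub_cyc[of x] sub_cyc[of m0] r1 r2] by blast
    obtain t where ta1: "y = s t x" using y(1) by blast
    obtain a where ta2: "y = s a m0" using y(2) by blast
    note ta = ta1 ta2
    have "t \<notin> p" using ta y(3) unfolding p_def Ann_def by auto
    moreover have "s t x = s a m0" using ta by simp
    ultimately show ?thesis by blast
  qed
  define rep where "rep x = (SOME (a,t). t \<notin> p \<and> s t x = s a m0)" for x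
  have repP: "snd (rep x) \<notin> p \<and> s (snd (rep x)) x = s (fst (rep x)) m0" for x
  proof -
    from ex obtain a t where "t \<notin> p \<and> s t x = s a m0" by blast
    then have "\<exists>z. (case z of (a,t) \<Rightarrow> t \<notin> p \<and> s t x = s a m0)" by auto
    then have "(case rep x of (a,t) \<Rightarrow> t \<notin> p \<and> s t x = s a m0)" unfolding rep_def by (rule someI_ex)
    then show ?thesis by (cases "rep x") auto
  qed
  define f where "f x = kcl p (fst (rep x)) (snd (rep x))" for x
  have key: "f x = kcl p a t" if "t \<notin> p" "s t x = s a m0" for x a t
  proof -
    obtain a' t' where r: "rep x = (a',t')" by fastforce
    have h: "t' \<notin> p" "s t' x = s a' m0" using repP[of x] r by auto
    have "s (t*a') m0 = s t (s t' x)" using h(2) smult by simp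
    also have "\<dots> = s t' (s t x)" by (rule scomm)
    also have "\<dots> = s (t'*a) m0" using that(2) smult by simp
    finally have "s (t*a' - t'*a) m0 = 0" by (simp add: sdiff2)
    then have "t*a' - t'*a \<in> p" using pm_ann[OF pm m0] p_def by blast
    then have "a'*t - a*t' \<in> p" by (simp add: mult.commute)
    then show ?thesis unfolding f_def r using kcl_eq[OF pp h(1) that(1)] by simp
  qed
  have getrep: "\<exists>a t. t \<notin> p \<and> s t x = s a m0 \<and> f x = kcl p a t" for x using ex key by blast
  have mono: "kappa_mono s p f"
    unfolding kappa_mono_def
  proof (intro conjI allI)
    fix x
    obtain a t where a: "t \<notin> p" "f x = kcl p a t" using getrep by blast
    show "f x \<in> kappa p" using kcl_in[OF a(1)] a(2) by simp
  next
    fix x y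
    obtain a t where a: "t \<notin> p" "s t x = s a m0" "f x = kcl p a t" using getrep by blast
    obtain b t' where b: "t' \<notin> p" "s t' y = s b m0" "f y = kcl p b t'" using getrep by blast
    have tt: "t*t' \<notin> p" using prime_ideal_mult[OF pp a(1) b(1)] .
    have "s (t*t') (x+y) = s (t'*t) x + s (t*t') y" by (simp add: sadd mult.commute)
    also have "\<dots> = s t' (s t x) + s t (s t' y)" by (simp add: smult)
    also have "\<dots> = s t' (s a m0) + s t (s b m0)" using a(2) b(2) by simp
    also have "\<dots> = s (a*t' + b*t) m0" by (simp add: smult sadd2 mult.commute)
    finally have e1: "s (t*t') (x+y) = s (a*t' + b*t) m0" .
    have "f (x+y) = kcl p (a*t' + b*t) (t*t')" using key[OF tt e1] .
    then show "f (x+y) = kappa_add p (f x) (f y)" using kadd[OF pp a(1) b(1)] a(3) b(3) by simp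
  next
    fix c x
    obtain a t where a: "t \<notin> p" "s t x = s a m0" "f x = kcl p a t" using getrep by blast
    have "s t (s c x) = s c (s t x)" by (rule scomm)
    also have "\<dots> = s (c*a) m0" using a(2) smult by simp
    finally have e1: "s t (s c x) = s (c*a) m0" .
    have "f (s c x) = kcl p (c*a) t" using key[OF a(1) e1] .
    then show "f (s c x) = kappa_scale p c (f x)" using kscale[OF pp a(1)] a(3) by simp
  next
    show "inj f"
    proof (rule injI)
      fix x y assume e: "f x = f y"
      obtain a t where a: "t \<notin> p" "s t x = s a m0" "f x = kcl p a t" using getrep by blast
      obtain b t' where b: "t' \<notin> p" "s t' y = s b m0" "f y = kcl p b t'" using getrep by blast
      have "a*t' - b*t \<in> p" using kcl_eq[OF pp a(1) b(1)] e a(3) b(3) by simp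
      then have "t'*a - t*b \<in> p" by (simp add: mult.commute)
      then have z: "s (t'*a - t*b) m0 = 0" by (simp add: p_def Ann_def)
      have ex: "s (t*t') x = s (t'*a) m0"
      proof -
        have "s (t*t') x = s t' (s t x)" by (simp add: smult mult.commute)
        also have "\<dots> = s (t'*a) m0" using a(2) smult by simp
        finally show ?thesis .
      qed
      have ey: "s (t*t') y = s (t*b) m0"
      proof -
        have "s (t*t') y = s t (s t' y)" by (simp add: smult)
        also have "\<dots> = s (t*b) m0" using b(2) smult by simp
        finally show ?thesis .
      qed
      have "s (t'*a) m0 - s (t*b) m0 = 0" using z by (simp only: sdiff2)
      then have "s (t'*a) m0 = s (t*b) m0" by simp
      then have eqs: "s (t*t') x = s (t*t') y" using ex ey by simp
      have "t*t' \<notin> Ann s" using prime_ideal_mult[OF pp a(1) b(1)] by (simp add: p_def)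
      then have ij: "inj (s (t*t'))" using pm_inj[OF pm] by blast
      show "x = y" using injD[OF ij eqs] .
    qed
  qed
  have "p \<in> Fstar F" using A by (simp add: p_def)
  then show ?thesis using mono nz by blast
qed

end

theorem theorem1p5:
  fixes F :: "'a::comm_ring_1 set set"
    and s :: "'a \<Rightarrow> 'm::ab_group_add \<Rightarrow> 'm"
  assumes "noetherian_ring TYPE('a)"
    and "local_ring TYPE('a)"
    and "gabriel_topology F"
    and "is_module s"
  shows "(simple_F_torsion_free s F \<longleftrightarrow>
            prime_module s \<and> uniform_module s \<and> Ann s \<in> Fstar F)
       \<and> (prime_module s \<and> uniform_module s \<and> Ann s \<in> Fstar F \<longleftrightarrow>
            (\<exists>p\<in>Fstar F. \<exists>f. kappa_mono s p f) \<and> (UNIV :: 'm set) \<noteq> {0})"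
proof -
  interpret modl s by (rule modl.intro) (rule assms(4))
  have A: "simple_F_torsion_free s F \<longleftrightarrow> prime_module s \<and> uniform_module s \<and> Ann s \<in> Fstar F"
    using i_ii[OF assms(3)] ii_i[OF assms(1) assms(3)] by blast
  have B: "prime_module s \<and> uniform_module s \<and> Ann s \<in> Fstar F \<longleftrightarrow>
            (\<exists>p\<in>Fstar F. \<exists>f. kappa_mono s p f) \<and> (UNIV :: 'm set) \<noteq> {0}"
    using iii_ii ii_iii by blast
  show ?thesis using A B by blast
qed

end
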